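(* Let $A\in\mathbb{R}^{n\times n}$ be symmetric positive definite with eigenvalues $0<\lambda_1\le\cdots\le\lambda_n$, $\lambda_1<\lambda_n$, and a corresponding orthonormal basis of eigenvectors $v_1,\dots,v_n$, let $c\in\mathbb{R}^n$, and consider the Barzilai--Borwein (BB) method applied to $\min_{x\in\mathbb{R}^n}\frac12x^\top Ax-c^\top x$, started from an arbitrary $x_0\in\mathbb{R}^n$. Let $g_k=Ax_k-c$, write $g_k=\sum_{i=1}^n d_k^iv_i$, let $\kappa=\lambda_n/\lambda_1$ and $\theta=1-\frac1\kappa$. For $i=1,\dots,n$ let $C_i=\max\left\{\frac{\lambda_i}{\lambda_1}-1,\ 1-\frac{\lambda_i}{\lambda_n}\right\}$ and define recursively $$F_1=|d_0^1|,\qquad F_i=\max\left\{|d_0^i|,\ \frac{|d_1^i|}{\theta},\ \theta^{-2}C_i^2\sqrt{\textstyle\sum_{j=1}^{i-1}F_j^2}\right\}\quad(i\ge2).$$ Then for every $k\ge1$ and every $i=1,\dots,n$, $|d_k^i|\le F_i\theta^k$; in particular each sequence $\{d_k^i\}$ converges to $0$ at least $R$-linearly with rate $\theta=1-\frac1\kappa$.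
   Context: The BB method for this problem: $x_1=x_0-\alpha_0 g_0$ with the exact line-search (steepest descent) step $\alpha_0=\frac{g_0^\top g_0}{g_0^\top A g_0}$, and for $k\ge1$, $x_{k+1}=x_k-\alpha_k g_k$ with $\alpha_k=\frac{s_{k-1}^\top s_{k-1}}{s_{k-1}^\top y_{k-1}}$, $s_{k-1}=x_k-x_{k-1}$, $y_{k-1}=g_k-g_{k-1}$; for this quadratic this equals $\alpha_k=\frac{g_{k-1}^\top g_{k-1}}{g_{k-1}^\top A g_{k-1}}$. Equivalently, the coefficients satisfy $d_1^i=d_0^i\cdot\frac{\sum_{j}(\lambda_j-\lambda_i)(d_0^j)^2}{\sum_j\lambda_j(d_0^j)^2}$ and $d_{k+1}^i=d_k^i\cdot\frac{\sum_{j}(\lambda_j-\lambda_i)(d_{k-1}^j)^2}{\sum_j\lambda_j(d_{k-1}^j)^2}$ for $k\ge1$. Convention: if some gradient vanishes, the method has reached the minimizer and all subsequent gradients (coefficients) are taken to be zero. *)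

theory Defs
  imports "HOL-Analysis.Analysis"
begin

text \<open>Barzilai--Borwein iteration for f(x) = 1/2 x'Ax - c'x, gradient g(x) = Ax - c.
  bb_pair A c x0 k = (x_k, x_{k+1}).  The first step uses the exact line-search step
  alpha_0 = g0'g0 / g0'A g0, later steps alpha_k = s'(s) / s'(y) with
  s = x_k - x_{k-1}, y = g_k - g_{k-1}.  (Division by zero gives 0 in HOL, so once a
  gradient vanishes the iterates stay put and all later gradients are zero.)\<close>

definition bb_grad :: "real^'n^'n \<Rightarrow> real^'n \<Rightarrow> real^'n \<Rightarrow> real^'n" where
  "bb_grad A c x = A *v x - c"

fun bb_pair :: "real^'n^'n \<Rightarrow> real^'n \<Rightarrow> real^'n \<Rightarrow> nat \<Rightarrow> (real^'n) \<times> (real^'n)" where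
  "bb_pair A c x0 0 =
     (let g0 = bb_grad A c x0;
          \<alpha>0 = (g0 \<bullet> g0) / (g0 \<bullet> (A *v g0))
      in (x0, x0 - \<alpha>0 *\<^sub>R g0))"
| "bb_pair A c x0 (Suc k) =
     (let (xp, xc) = bb_pair A c x0 k;
          s = xc - xp;
          y = bb_grad A c xc - bb_grad A c xp;
          \<alpha> = (s \<bullet> s) / (s \<bullet> y)
      in (xc, xc - \<alpha> *\<^sub>R bb_grad A c xc))"

definition bb_iter :: "real^'n^'n \<Rightarrow> real^'n \<Rightarrow> real^'n \<Rightarrow> nat \<Rightarrow> real^'n" where
  "bb_iter A c x0 k = fst (bb_pair A c x0 k)"

definition bb_coeff :: "real^'n^'n \<Rightarrow> real^'n \<Rightarrow> real^'n \<Rightarrow> (nat \<Rightarrow> real^'n) \<Rightarrow> nat \<Rightarrow> nat \<Rightarrow> real" where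
  "bb_coeff A c x0 v k i = bb_grad A c (bb_iter A c x0 k) \<bullet> v i"

text \<open>The recursively defined bounds F_i (indices shifted to start at 0):
  Fsq d0 d1 C \<theta> i = sum of F_j^2 for j < i.\<close>
fun Fsq :: "(nat \<Rightarrow> real) \<Rightarrow> (nat \<Rightarrow> real) \<Rightarrow> (nat \<Rightarrow> real) \<Rightarrow> real \<Rightarrow> nat \<Rightarrow> real"
and Fbound :: "(nat \<Rightarrow> real) \<Rightarrow> (nat \<Rightarrow> real) \<Rightarrow> (nat \<Rightarrow> real) \<Rightarrow> real \<Rightarrow> nat \<Rightarrow> real" where
  "Fsq d0 d1 C \<theta> 0 = 0"
| "Fsq d0 d1 C \<theta> (Suc i) = Fsq d0 d1 C \<theta> i + (Fbound d0 d1 C \<theta> i)\<^sup>2"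
| "Fbound d0 d1 C \<theta> 0 = \<bar>d0 0\<bar>"
| "Fbound d0 d1 C \<theta> (Suc i) =
     max \<bar>d0 (Suc i)\<bar> (max (\<bar>d1 (Suc i)\<bar> / \<theta>)
        (\<theta> powi (-2) * (C (Suc i))\<^sup>2 * sqrt (Fsq d0 d1 C \<theta> (Suc i))))"

end

theory Submission
  imports Defs
begin

lemma sym_dot:
  fixes A :: "real^'n^'n"
  assumes "transpose A = A"
  shows "(A *v x) \<bullet> y = x \<bullet> (A *v y)"
proof -
  have sy: "A$i$j = A$j$i" for i j
    by (metis assms transpose_def vec_lambda_beta)
  have "(A *v x) \<bullet> y = (\<Sum>i\<in>UNIV. (\<Sum>j\<in>UNIV. A$i$j * x$j) * y$i)"
    by (simp add: inner_vec_def matrix_vector_mult_def)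
  also have "\<dots> = (\<Sum>j\<in>UNIV. x$j * (\<Sum>i\<in>UNIV. A$j$i * y$i))"
    using assms unfolding sum_distrib_left sum_distrib_right
    apply (subst sum.swap)
    apply (intro sum.cong refl)
    by (simp add: sy mult_ac)
  also have "\<dots> = x \<bullet> (A *v y)"
    by (simp add: inner_vec_def matrix_vector_mult_def)
  finally show ?thesis .
qed

lemma expand:
  fixes v :: "nat \<Rightarrow> real^'n"
  assumes orth: "\<And>i j. i < CARD('n) \<Longrightarrow> j < CARD('n) \<Longrightarrow> v i \<bullet> v j = (if i = j then 1 else 0)"
  shows "y = (\<Sum>j<CARD('n). (y \<bullet> v j) *\<^sub>R v j)"
proof -
  let ?n = "CARD('n)"
  let ?B = "v ` {..<?n}"
  have inj: "inj_on v {..<?n}"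
    by (rule inj_onI) (metis orth lessThan_iff zero_neq_one)
  have cardB: "card ?B = ?n" using card_image[OF inj] by simp
  have "pairwise orthogonal ?B"
    unfolding pairwise_def orthogonal_def using orth by auto
  moreover have "0 \<notin> ?B" using orth by (auto simp: image_iff) (metis inner_zero_left zero_neq_one)
  ultimately have ind: "independent ?B" by (rule pairwise_orthogonal_independent)
  have "UNIV \<subseteq> span ?B"
    using eucl.card_eq_dim[of ?B UNIV] ind cardB by (simp add: dim_UNIV)
  let ?r = "y - (\<Sum>j<?n. (y \<bullet> v j) *\<^sub>R v j)"
  have rv: "?r \<bullet> v i = 0" if "i < ?n" for i
  proof -
    have "(\<Sum>j<?n. (y \<bullet> v j) *\<^sub>R v j) \<bullet> v i = (\<Sum>j<?n. (y \<bullet> v j) * (v j \<bullet> v i))"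
      by (simp add: inner_sum_left)
    also have "\<dots> = (\<Sum>j<?n. if j = i then y \<bullet> v j else 0)"
      by (intro sum.cong refl) (simp add: orth that)
    also have "\<dots> = y \<bullet> v i" using that by simp
    finally show ?thesis by (simp add: inner_diff_left)
  qed
  have "orthogonal ?r ?r"
    apply (rule orthogonal_to_span[of ?r ?B])
    using \<open>UNIV \<subseteq> span ?B\<close> rv by (auto simp: orthogonal_def)
  then show ?thesis by (simp add: orthogonal_def)
qed

definition rho :: "real^'n^'n \<Rightarrow> real^'n \<Rightarrow> real" where
  "rho A y = (y \<bullet> y) / (y \<bullet> (A *v y))"

lemma pair_eq: "bb_pair A c x0 k = (bb_iter A c x0 k, bb_iter A c x0 (Suc k))"
proof -
  have "fst (bb_pair A c x0 (Suc k)) = snd (bb_pair A c x0 k)"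
    by (simp add: Let_def case_prod_beta)
  then show ?thesis unfolding bb_iter_def by (metis prod.collapse)
qed

lemma iter_1: "bb_iter A c x0 (Suc 0) = x0 - rho A (bb_grad A c x0) *\<^sub>R bb_grad A c x0"
  by (simp add: bb_iter_def Let_def rho_def)

lemma iter_0: "bb_iter A c x0 0 = x0"
  by (simp add: bb_iter_def Let_def)

lemma iter_SS: "bb_iter A c x0 (Suc (Suc k)) =
   (let s = bb_iter A c x0 (Suc k) - bb_iter A c x0 k in
    bb_iter A c x0 (Suc k) - ((s \<bullet> s) / (s \<bullet> (A *v s))) *\<^sub>R bb_grad A c (bb_iter A c x0 (Suc k)))"
proof -
  have "bb_iter A c x0 (Suc (Suc k)) = snd (bb_pair A c x0 (Suc k))"
    using pair_eq[of A c x0 "Suc k"] by simp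
  also have "\<dots> = (let s = bb_iter A c x0 (Suc k) - bb_iter A c x0 k in
    bb_iter A c x0 (Suc k) - ((s \<bullet> s) / (s \<bullet> (A *v s))) *\<^sub>R bb_grad A c (bb_iter A c x0 (Suc k)))"
    by (simp add: pair_eq[of A c x0 k] Let_def bb_grad_def matrix_vector_mult_diff_distrib)
  finally show ?thesis .
qed

lemma rho_pos:
  assumes posdef: "\<And>x. x \<noteq> 0 \<Longrightarrow> x \<bullet> (A *v x) > 0" and "y \<noteq> 0"
  shows "rho A y > 0"
  using posdef[OF assms(2)] assms(2) by (simp add: rho_def)

lemma rho_scale:
  assumes "a \<noteq> 0"
  shows "rho A (a *\<^sub>R y) = rho A y"
proof -
  have "rho A (a *\<^sub>R y) = (a*a*(y \<bullet> y)) / (a*a*(y \<bullet> (A *v y)))"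
    by (simp add: rho_def matrix_vector_mult_scaleR mult_ac)
  then show ?thesis using assms by (simp add: rho_def)
qed

lemma iter_step:
  assumes posdef: "\<And>x. x \<noteq> 0 \<Longrightarrow> x \<bullet> (A *v x) > 0"
  shows "bb_iter A c x0 (Suc k) = bb_iter A c x0 k
           - rho A (bb_grad A c (bb_iter A c x0 (k - 1))) *\<^sub>R bb_grad A c (bb_iter A c x0 k)"
proof (induction k rule: less_induct)
  case (less k)
  let ?x = "bb_iter A c x0" and ?g = "\<lambda>k. bb_grad A c (bb_iter A c x0 k)"
  show ?case
  proof (cases k)
    case 0
    then show ?thesis by (simp add: iter_1 iter_0)
  next
    case (Suc m)
    define a where "a = rho A (?g (m - 1))"
    have xm: "?x (Suc m) = ?x m - a *\<^sub>R ?g m" using less[of m] Suc a_def by simp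
    define s where "s = ?x (Suc m) - ?x m"
    have s: "s = (-a) *\<^sub>R ?g m" using xm s_def by simp
    have "?x (Suc k) = ?x (Suc m) - ((s \<bullet> s) / (s \<bullet> (A *v s))) *\<^sub>R ?g (Suc m)"
      using iter_SS[of A c x0 m] Suc by (simp add: Let_def s_def)
    moreover have "((s \<bullet> s) / (s \<bullet> (A *v s))) *\<^sub>R ?g (Suc m) = rho A (?g m) *\<^sub>R ?g (Suc m)"
    proof (cases "a = 0")
      case False
      then show ?thesis using rho_scale[of "-a" A "?g m"] s by (simp add: rho_def)
    next
      case True
      then have "?g (m - 1) = 0" using rho_pos[OF posdef] a_def by fastforce
      moreover have "?g m = ?g (m - 1)"
      proof (cases m)
        case 0 then show ?thesis by simp
      next
        case (Suc p)
        have "?x m = ?x p - rho A (?g (p - 1)) *\<^sub>R ?g p" using less[of p] Suc \<open>k = Suc m\<close> by simp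
        then show ?thesis using Suc \<open>?g (m - 1) = 0\<close> by simp
      qed
      ultimately show ?thesis using True s by (simp add: rho_def)
    qed
    ultimately show ?thesis using Suc by simp
  qed
qed

lemma grad_lin: "bb_grad A c (x - a *\<^sub>R y) = bb_grad A c x - a *\<^sub>R (A *v y)"
  by (simp add: bb_grad_def matrix_vector_mult_diff_distrib matrix_vector_mult_scaleR)

lemma grad_step:
  assumes posdef: "\<And>x. x \<noteq> 0 \<Longrightarrow> x \<bullet> (A *v x) > 0"
  shows "bb_grad A c (bb_iter A c x0 (Suc k)) = bb_grad A c (bb_iter A c x0 k)
           - rho A (bb_grad A c (bb_iter A c x0 (k - 1))) *\<^sub>R (A *v bb_grad A c (bb_iter A c x0 k))"
  using iter_step[OF posdef, of c x0 k] grad_lin by metis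

lemma sqrt_aux:
  fixes e S Sl :: real
  assumes "e^2 \<le> S" "Sl \<le> S" "0 < S" "0 \<le> Sl"
  shows "\<bar>e\<bar> * (Sl / S) \<le> sqrt Sl"
proof -
  have e: "\<bar>e\<bar> \<le> sqrt S" using assms(1) real_le_rsqrt by (simp add: real_sqrt_abs[symmetric] del: real_sqrt_abs)
  define q where "q = sqrt Sl / sqrt S"
  have q0: "0 \<le> q" "q \<le> 1" using assms by (auto simp: q_def divide_simps real_sqrt_le_mono)
  have "Sl / S = q^2" using assms by (simp add: q_def power_divide)
  also have "\<dots> \<le> q" using q0 by (simp add: power2_eq_square mult_left_le)
  also have "\<dots> = sqrt Sl / sqrt S" by (simp add: q_def)
  finally have "\<bar>e\<bar> * (Sl / S) \<le> sqrt S * (sqrt Sl / sqrt S)"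
    using e by (meson abs_ge_zero assms divide_nonneg_pos mult_mono real_sqrt_ge_zero order_trans)
  then show ?thesis using assms by simp
qed

lemma Fsq_eq: "Fsq d0 d1 C t i = (\<Sum>j<i. (Fbound d0 d1 C t j)^2)"
  by (induction i) auto

lemma F_nonneg: "Fbound d0 d1 C t i \<ge> 0"
  by (cases i) auto

lemma F_ge0: "\<bar>d0 i\<bar> \<le> Fbound d0 d1 C t i"
  by (cases i) auto

lemma F_ge1: "\<bar>d1 (Suc i)\<bar> / t \<le> Fbound d0 d1 C t (Suc i)"
  by auto

lemma F_ge2: "t powi (-2) * (C (Suc i))\<^sup>2 * sqrt (Fsq d0 d1 C t (Suc i)) \<le> Fbound d0 d1 C t (Suc i)"
  by auto

locale bbs =
  fixes A :: "real^'n^'n" and lam :: "nat \<Rightarrow> real" and v :: "nat \<Rightarrow> real^'n"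
  assumes sym: "transpose A = A"
    and posdef: "\<And>x. x \<noteq> 0 \<Longrightarrow> x \<bullet> (A *v x) > 0"
    and eig: "\<And>i. i < CARD('n) \<Longrightarrow> A *v v i = lam i *\<^sub>R v i"
    and orth: "\<And>i j. i < CARD('n) \<Longrightarrow> j < CARD('n) \<Longrightarrow> v i \<bullet> v j = (if i = j then 1 else 0)"
    and sorted: "\<And>i j. i \<le> j \<Longrightarrow> j < CARD('n) \<Longrightarrow> lam i \<le> lam j"
    and pos: "0 < lam 0"
    and distinct: "lam 0 < lam (CARD('n) - 1)"
begin

definition "th = 1 - lam 0 / lam (CARD('n) - 1)"
definition "Cc i = max (lam i / lam 0 - 1) (1 - lam i / lam (CARD('n) - 1))"

lemma L_pos: "lam (CARD('n) - 1) > 0" using pos distinct by simp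

lemma lam_bounds: "j < CARD('n) \<Longrightarrow> lam 0 \<le> lam j \<and> lam j \<le> lam (CARD('n) - 1)"
  using sorted[of 0 j] sorted[of j "CARD('n) - 1"] by auto

lemma th_pos: "0 < th" "th < 1"
  using pos distinct L_pos by (auto simp: th_def field_simps)

lemma coef_step: "i < CARD('n) \<Longrightarrow> (y - r *\<^sub>R (A *v y)) \<bullet> v i = (y \<bullet> v i) * (1 - r * lam i)"
  using sym_dot[OF sym, of y "v i"] eig[of i]
  by (simp add: inner_diff_left algebra_simps)

lemma pars1: "y \<bullet> y = (\<Sum>j<CARD('n). (y \<bullet> v j)^2)"
proof -
  have "y \<bullet> y = y \<bullet> (\<Sum>j<CARD('n). (y \<bullet> v j) *\<^sub>R v j)" using expand[OF orth, of y] by simp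
  then show ?thesis by (simp add: inner_sum_right power2_eq_square)
qed

lemma pars2: "y \<bullet> (A *v y) = (\<Sum>j<CARD('n). lam j * (y \<bullet> v j)^2)"
proof -
  have "y \<bullet> (A *v y) = (A *v y) \<bullet> y" by (simp add: inner_commute)
  also have "\<dots> = (A *v y) \<bullet> (\<Sum>j<CARD('n). (y \<bullet> v j) *\<^sub>R v j)" using expand[OF orth, of y] by simp
  also have "\<dots> = (\<Sum>j<CARD('n). (y \<bullet> v j) * ((A *v y) \<bullet> v j))" by (simp add: inner_sum_right)
  also have "\<dots> = (\<Sum>j<CARD('n). lam j * (y \<bullet> v j)^2)"
    by (intro sum.cong refl) (simp add: sym_dot[OF sym] eig power2_eq_square)
  finally show ?thesis .
qed

lemma factor_bounds:
  assumes "y \<noteq> 0" "i < CARD('n)"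
  defines "f \<equiv> 1 - rho A y * lam i"
  shows "f \<le> th" "\<bar>f\<bar> \<le> Cc i"
    "f \<ge> - Cc i * ((\<Sum>j<i. (y \<bullet> v j)^2) / (\<Sum>j<CARD('n). (y \<bullet> v j)^2))"
proof -
  define S where "S = (\<Sum>j<CARD('n). (y \<bullet> v j)^2)"
  define T where "T = (\<Sum>j<CARD('n). lam j * (y \<bullet> v j)^2)"
  define Sl where "Sl = (\<Sum>j<i. (y \<bullet> v j)^2)"
  have "y \<bullet> y > 0" using assms(1) by simp
  then have S0: "S > 0" using pars1[of y] S_def by simp
  have T1: "lam 0 * S \<le> T" unfolding S_def T_def sum_distrib_left
    by (intro sum_mono) (simp add: lam_bounds mult_right_mono)
  have T2: "T \<le> lam (CARD('n) - 1) * S" unfolding S_def T_def sum_distrib_left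
    by (intro sum_mono mult_right_mono) (use lam_bounds in auto)
  have T0: "T > 0" using T1 S0 pos by (smt (verit) mult_pos_pos)
  have rho: "rho A y = S / T" by (simp add: rho_def pars1 pars2 S_def T_def)
  have li: "lam 0 \<le> lam i" "lam i \<le> lam (CARD('n) - 1)" using lam_bounds assms(2) by auto
  have r1: "S / T \<ge> 1 / lam (CARD('n) - 1)" using T2 S0 T0 L_pos by (simp add: field_simps)
  have r2: "S / T \<le> 1 / lam 0" using T1 S0 T0 pos by (simp add: field_simps)
  have fu: "f \<le> 1 - lam i / lam (CARD('n) - 1)" unfolding f_def rho
    using mult_left_mono[OF r1, of "lam i"] li pos by (simp add: field_simps)
  have fl: "f \<ge> 1 - lam i / lam 0" unfolding f_def rho
    using mult_left_mono[OF r2, of "lam i"] li pos by (simp add: field_simps)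
  have "1 - lam i / lam (CARD('n) - 1) \<le> th" unfolding th_def using li L_pos pos
    by (simp add: divide_right_mono)
  then show "f \<le> th" using fu by simp
  show "\<bar>f\<bar> \<le> Cc i" using fu fl unfolding Cc_def by linarith
  have "f * T = T - lam i * S" unfolding f_def rho using T0 by (simp add: field_simps)
  also have "\<dots> = (\<Sum>j<CARD('n). (lam j - lam i) * (y \<bullet> v j)^2)"
    unfolding T_def S_def sum_distrib_left sum_subtractf[symmetric] by (simp add: algebra_simps)
  also have "\<dots> \<ge> (\<Sum>j<i. (lam j - lam i) * (y \<bullet> v j)^2)"
  proof -
    have sp: "{..<CARD('n)} = {..<i} \<union> {i..<CARD('n)}" using assms(2) by auto
    have "(\<Sum>j\<in>{i..<CARD('n)}. (lam j - lam i) * (y \<bullet> v j)^2) \<ge> 0"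
      by (intro sum_nonneg) (simp add: sorted)
    then show ?thesis unfolding sp by (subst sum.union_disjoint) auto
  qed
  finally have a: "f * T \<ge> (\<Sum>j<i. (lam j - lam i) * (y \<bullet> v j)^2)" .
  have "(\<Sum>j<i. (lam j - lam i) * (y \<bullet> v j)^2) \<ge> (\<Sum>j<i. (lam 0 - lam i) * (y \<bullet> v j)^2)"
    by (intro sum_mono mult_right_mono) (use lam_bounds assms(2) in auto)
  with a have b: "f * T \<ge> (lam 0 - lam i) * Sl" by (simp add: Sl_def sum_distrib_left)
  have Sl0: "Sl \<ge> 0" unfolding Sl_def by (simp add: sum_nonneg)
  have "(lam 0 - lam i) * Sl / T \<ge> (lam 0 - lam i) * Sl / (lam 0 * S)"
  proof -
    have "(lam i - lam 0) * Sl / T \<le> (lam i - lam 0) * Sl / (lam 0 * S)"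
      using T1 T0 S0 pos li Sl0 by (intro divide_left_mono mult_nonneg_nonneg) auto
    moreover have "(lam 0 - lam i) * Sl / X = - ((lam i - lam 0) * Sl / X)" for X
      by (metis minus_diff_eq mult_minus_left minus_divide_left)
    ultimately show ?thesis by (metis neg_le_iff_le)
  qed
  moreover have "f \<ge> (lam 0 - lam i) * Sl / T" using b T0 by (simp add: field_simps)
  moreover have "(lam 0 - lam i) * Sl / (lam 0 * S) = - (lam i / lam 0 - 1) * (Sl / S)"
    using pos S0 by (simp add: field_simps)
  moreover have "- (lam i / lam 0 - 1) * (Sl / S) \<ge> - Cc i * (Sl / S)"
    using Sl0 S0 unfolding Cc_def by (intro mult_right_mono) auto
  ultimately show "f \<ge> - Cc i * ((\<Sum>j<i. (y \<bullet> v j)^2) / (\<Sum>j<CARD('n). (y \<bullet> v j)^2))"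
    unfolding Sl_def S_def by linarith
qed


lemma G_zero: "bb_grad A c (bb_iter A c x0 m) = 0 \<Longrightarrow> bb_grad A c (bb_iter A c x0 (Suc m)) = 0"
  using grad_step[OF posdef, of c x0 m] by simp

lemma G_zero_le:
  assumes "bb_grad A c (bb_iter A c x0 m) = 0" "m \<le> k"
  shows "bb_grad A c (bb_iter A c x0 k) = 0"
  using assms(2)
proof (induction k rule: dec_induct)
  case base then show ?case using assms(1) .
next
  case (step k) then show ?case using G_zero by blast
qed

lemma d_step: "i < CARD('n) \<Longrightarrow> bb_coeff A c x0 v (Suc k) i
   = bb_coeff A c x0 v k i * (1 - rho A (bb_grad A c (bb_iter A c x0 (k - 1))) * lam i)"
  using grad_step[OF posdef, of c x0 k] coef_step by (simp add: bb_coeff_def)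

lemma bound:
  assumes "i < CARD('n)"
  shows "\<bar>bb_coeff A c x0 v k i\<bar> \<le> Fbound (bb_coeff A c x0 v 0) (bb_coeff A c x0 v 1) Cc th i * th ^ k"
  using assms
proof (induction i arbitrary: k rule: less_induct)
  case (less i)
  define d where "d = bb_coeff A c x0 v"
  define G where "G = (\<lambda>k. bb_grad A c (bb_iter A c x0 k))"
  define F where "F = Fbound (d 0) (d 1) Cc th"
  have dG: "d k j = G k \<bullet> v j" for k j by (simp add: d_def G_def bb_coeff_def)
  have IHo: "\<bar>d k j\<bar> \<le> F j * th ^ k" if "j < i" for j k
    using less.IH[of j k] that less.prems by (simp add: d_def F_def)
  have Fn: "F i \<ge> 0" by (simp add: F_def F_nonneg)
  have thp: "0 < th" "th < 1" using th_pos by auto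
  show ?case unfolding d_def[symmetric] F_def[symmetric]
  proof (induction k)
    case 0
    then show ?case using F_ge0[of "d 0" i] by (simp add: F_def)
  next
    case (Suc k)
    define f where "f = 1 - rho A (G (k - 1)) * lam i"
    have ds: "d (Suc k) i = d k i * f" using d_step[OF less.prems] by (simp add: d_def f_def G_def)
    show ?case
    proof (cases "G (k - 1) = 0")
      case True
      then have "G (Suc k) = 0" using G_zero_le[of c x0 "k - 1" "Suc k"] by (simp add: G_def)
      then show ?thesis using Fn thp by (simp add: dG)
    next
      case Gn: False
      note fb = factor_bounds[OF Gn less.prems, folded f_def]
      show ?thesis
      proof (cases "f \<ge> 0")
        case True
        then have "\<bar>d (Suc k) i\<bar> = \<bar>d k i\<bar> * f" by (simp add: ds abs_mult)
        also have "\<dots> \<le> (F i * th ^ k) * th"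
          using Suc.IH fb(1) True by (intro mult_mono) auto
        finally show ?thesis by (simp add: mult_ac)
      next
        case False
        define S where "S = (\<Sum>j<CARD('n). (G (k - 1) \<bullet> v j)^2)"
        define Sl where "Sl = (\<Sum>j<i. (G (k - 1) \<bullet> v j)^2)"
        have fl: "- f \<le> Cc i * (Sl / S)" using fb(3) unfolding S_def Sl_def by linarith
        have "i \<noteq> 0"
        proof
          assume "i = 0"
          then have "Sl = 0" by (simp add: Sl_def)
          then show False using fl False by simp
        qed
        then obtain i' where i': "i = Suc i'" by (cases i) auto
        show ?thesis
        proof (cases k)
          case 0
          have "\<bar>d 1 i\<bar> / th \<le> F i" using F_ge1[of "d 1" i'] i' by (simp add: F_def)
          then have "\<bar>d 1 i\<bar> \<le> F i * th" using thp by (simp add: field_simps)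
          then show ?thesis using 0 by simp
        next
          case (Suc m)
          have Gm: "G (m - 1) \<noteq> 0"
            using Gn G_zero_le[of c x0 "m - 1" m] Suc by (auto simp: G_def)
          define f' where "f' = 1 - rho A (G (m - 1)) * lam i"
          have f'b: "\<bar>f'\<bar> \<le> Cc i" using factor_bounds(2)[OF Gm less.prems] by (simp add: f'_def)
          have dk: "d k i = d m i * f'" using d_step[OF less.prems, of c x0 m] Suc
            by (simp add: d_def f'_def G_def)
          have S0: "S > 0" using Gn pars1[of "G (k - 1)"] S_def by (metis inner_gt_zero_iff)
          have Sl0: "Sl \<ge> 0" by (simp add: Sl_def sum_nonneg)
          have eS: "(d m i)^2 \<le> S" unfolding S_def dG Suc diff_Suc_1
            by (rule member_le_sum[where f="\<lambda>j. (G m \<bullet> v j)^2"]) (use less.prems in auto)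
          have SlS: "Sl \<le> S" unfolding S_def Sl_def using less.prems
            by (intro sum_mono2) auto
          have Cn: "Cc i \<ge> 0" using \<open>\<bar>f'\<bar> \<le> Cc i\<close> by linarith
          have "\<bar>d (Suc k) i\<bar> = \<bar>d m i\<bar> * \<bar>f'\<bar> * \<bar>f\<bar>" by (simp add: ds dk abs_mult)
          also have "\<dots> \<le> \<bar>d m i\<bar> * Cc i * (Cc i * (Sl / S))"
            using f'b fl False by (intro mult_mono mult_left_mono) auto
          also have "\<dots> = Cc i ^ 2 * (\<bar>d m i\<bar> * (Sl / S))" by (simp add: power2_eq_square mult_ac)
          also have "\<dots> \<le> Cc i ^ 2 * sqrt Sl"
            using sqrt_aux[OF eS SlS S0 Sl0] by (intro mult_left_mono) auto
          also have "\<dots> \<le> Cc i ^ 2 * (th ^ m * sqrt (Fsq (d 0) (d 1) Cc th i))"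
          proof -
            have "Sl \<le> (\<Sum>j<i. (F j * th ^ m)^2)"
              unfolding Sl_def using Suc
            proof (intro sum_mono)
              fix j assume "j \<in> {..<i}"
              then have "\<bar>d m j\<bar> \<le> F j * th ^ m" using IHo by auto
              then have "\<bar>d m j\<bar>^2 \<le> (F j * th ^ m)^2" by (intro power_mono) auto
              then show "(G (k - 1) \<bullet> v j)^2 \<le> (F j * th ^ m)^2" using Suc by (simp add: dG)
            qed
            also have "\<dots> = (th ^ m)^2 * Fsq (d 0) (d 1) Cc th i"
              by (simp add: Fsq_eq F_def sum_distrib_left power_mult_distrib mult_ac)
            finally have "sqrt Sl \<le> sqrt ((th ^ m)^2 * Fsq (d 0) (d 1) Cc th i)"
              by (rule real_sqrt_le_mono)
            also have "\<dots> = th ^ m * sqrt (Fsq (d 0) (d 1) Cc th i)"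
              using thp by (simp add: real_sqrt_mult)
            finally show ?thesis by (intro mult_left_mono) auto
          qed
          also have "\<dots> = (th powi (-2) * (Cc i)\<^sup>2 * sqrt (Fsq (d 0) (d 1) Cc th i)) * th ^ Suc k"
            using thp Suc by (simp add: power_int_minus field_simps power2_eq_square)
          also have "\<dots> \<le> F i * th ^ Suc k"
            using F_ge2[of th Cc i' "d 0" "d 1"] i' thp by (intro mult_right_mono) (auto simp: F_def)
          finally show ?thesis .
        qed
      qed
    qed
  qed
qed

end

theorem theorem1:
  fixes A :: "real^'n^'n" and c x0 :: "real^'n"
    and lam :: "nat \<Rightarrow> real" and v :: "nat \<Rightarrow> real^'n"
  assumes sym: "transpose A = A"
    and posdef: "\<And>x. x \<noteq> 0 \<Longrightarrow> x \<bullet> (A *v x) > 0"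
    and eig: "\<And>i. i < CARD('n) \<Longrightarrow> A *v v i = lam i *\<^sub>R v i"
    and orth: "\<And>i j. i < CARD('n) \<Longrightarrow> j < CARD('n) \<Longrightarrow> v i \<bullet> v j = (if i = j then 1 else 0)"
    and sorted: "\<And>i j. i \<le> j \<Longrightarrow> j < CARD('n) \<Longrightarrow> lam i \<le> lam j"
    and pos: "0 < lam 0"
    and distinct: "lam 0 < lam (CARD('n) - 1)"
  defines "d \<equiv> bb_coeff A c x0 v"
    and "\<theta> \<equiv> 1 - 1 / (lam (CARD('n) - 1) / lam 0)"
    and "C \<equiv> (\<lambda>i. max (lam i / lam 0 - 1) (1 - lam i / lam (CARD('n) - 1)))"
  shows "(\<forall>k\<ge>1. \<forall>i<CARD('n). \<bar>d k i\<bar> \<le> Fbound (d 0) (d 1) C \<theta> i * \<theta> ^ k)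
         \<and> (\<forall>i<CARD('n). (\<lambda>k. d k i) \<longlonglongrightarrow> 0)"
proof -
  interpret bbs A lam v
    by unfold_locales (use assms in auto)
  have th: "\<theta> = th" unfolding \<theta>_def th_def by simp
  have C: "C = Cc" unfolding C_def Cc_def by (rule ext) simp
  have b: "\<bar>d k i\<bar> \<le> Fbound (d 0) (d 1) C \<theta> i * \<theta> ^ k" if "i < CARD('n)" for k i
    unfolding th C d_def using bound[OF that] .
  have "(\<lambda>k. d k i) \<longlonglongrightarrow> 0" if "i < CARD('n)" for i
  proof (rule Lim_null_comparison)
    show "\<forall>\<^sub>F k in sequentially. norm (d k i) \<le> Fbound (d 0) (d 1) C \<theta> i * \<theta> ^ k"
      using b[OF that] by simp
    show "(\<lambda>k. Fbound (d 0) (d 1) C \<theta> i * \<theta> ^ k) \<longlonglongrightarrow> 0"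
      using th_pos unfolding th by (intro tendsto_mult_right_zero LIMSEQ_power_zero) auto
  qed
  then show ?thesis using b by blast
qed

end
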